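(* Let $X=(x_1\ \cdots\ x_{n+1})$ be a real $n\times(n+1)$ matrix all of whose maximal ($n\times n$) minors have the same sign. Let $X'$ be obtained from $X$ by switching two columns $x_i,x_j$ whose indices $i,j$ are both even or both odd. Then every maximal minor of $X'$ has the opposite sign of the corresponding maximal minor of $X$. Here the maximal minor for a column index set $I$ is taken with columns in increasing order of index. *)

theory Defs
  imports "Jordan_Normal_Form.Column_Operations" "Jordan_Normal_Form.DL_Submatrix"
          "Jordan_Normal_Form.Determinant"
begin

text \<open>Maximal minor of a matrix X (with n rows) for the column index set I (of size n):
  the determinant of the submatrix consisting of all rows and the columns in I,
  taken in increasing order of index (submatrix uses pick, which enumerates I increasingly).\<close>
definition maxminor :: "real mat \<Rightarrow> nat set \<Rightarrow> real" where
  "maxminor X I = det (submatrix X UNIV I)"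

end

theory Submission
  imports Defs
begin


lemma det_permute_cols:
  assumes B: "B \<in> carrier_mat n n" and p: "p permutes {0..<n}"
  shows "det (mat n n (\<lambda>(r,c). B $$ (r, p c))) = signof p * det B"
proof -
  have "transpose_mat (mat n n (\<lambda>(r,c). B $$ (r, p c))) = mat n n (\<lambda>(i,j). transpose_mat B $$ (p i, j))"
    using B permutes_in_image[OF p] by (intro eq_matI) auto
  hence "det (mat n n (\<lambda>(r,c). B $$ (r, p c))) = det (mat n n (\<lambda>(i,j). transpose_mat B $$ (p i, j)))"
    by (metis det_transpose mat_carrier)
  also have "\<dots> = signof p * det (transpose_mat B)"
    by (rule det_permute_rows[OF _ p]) (use B in auto)
  finally show ?thesis using det_transpose[OF B] by simp
qed

definition fk :: "nat \<Rightarrow> nat \<Rightarrow> nat" where "fk k c = (if c < k then c else Suc c)"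

lemma pick_fk: "c < n \<Longrightarrow> k < Suc n \<Longrightarrow> pick ({..<Suc n} - {k}) c = fk k c"
proof (induction c)
  case 0
  show ?case unfolding pick.simps fk_def
    by (rule Least_equality) (use 0 in auto)
next
  case (Suc c)
  have "pick ({..<Suc n} - {k}) c = fk k c" using Suc by auto
  then show ?case unfolding pick.simps using Suc.prems
    unfolding fk_def
    by (intro Least_equality) (auto split: if_splits)
qed

lemma maxminor_eq:
  assumes X: "X \<in> carrier_mat n (n + 1)" and k: "k < n + 1"
  shows "maxminor X ({..<n+1} - {k}) = det (mat n n (\<lambda>(r,c). X $$ (r, fk k c)))"
proof -
  have c1: "card {i. i < dim_row X \<and> i \<in> UNIV} = n" using X by auto
  have "{j. j < dim_col X \<and> j \<in> {..<n+1} - {k}} = {..<n+1} - {k}" using X by auto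
  hence c2: "card {j. j < dim_col X \<and> j \<in> {..<n+1} - {k}} = n" using k by simp
  have "submatrix X UNIV ({..<n+1} - {k}) = mat n n (\<lambda>(r,c). X $$ (r, fk k c))"
    unfolding submatrix_def c1 c2 by (intro eq_matI) (use k in \<open>auto simp: pick_UNIV pick_fk\<close>)
  thus ?thesis unfolding maxminor_def by simp
qed

lemma I_form:
  assumes "I \<subseteq> {..<n+1}" "card I = n"
  shows "\<exists>k<n+1. I = {..<n+1} - {k}"
proof -
  have "card {..<n+1} = n+1" by simp
  have "I \<noteq> {..<n+1}"
  proof
    assume "I = {..<n+1}" then have "card I = n+1" by simp
    with assms show False by simp
  qed
  then obtain k where k: "k < n+1" "k \<notin> I" using assms by auto
  have "I \<subseteq> {..<n+1} - {k}" using assms k by auto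
  moreover have "card ({..<n+1} - {k}) = card I" using k assms by simp
  ultimately have "I = {..<n+1} - {k}" by (intro card_subset_eq) auto
  thus ?thesis using k by blast
qed

primrec cyc :: "nat \<Rightarrow> nat \<Rightarrow> nat \<Rightarrow> nat" where
  "cyc i 0 = id"
| "cyc i (Suc d) = cyc i d \<circ> transpose (i+d) (Suc (i+d))"

lemma cyc_permutes: "i + d < n \<Longrightarrow> cyc i d permutes {0..<n}"
  by (induction d) (auto intro!: permutes_compose permutes_swap_id permutes_id)

lemma cyc_sign: "sign (cyc i d) = (-1::int)^d"
proof (induction d)
  case 0 then show ?case by simp
next
  case (Suc d)
  have "permutation (cyc i d)"
    by (metis cyc_permutes finite_atLeastLessThan lessI permutation_permutes)
  then have "sign (cyc i (Suc d)) = sign (cyc i d) * sign (transpose (i+d) (Suc (i+d)))"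
    unfolding cyc.simps by (rule sign_compose[OF _ permutation_swap_id])
  then show ?case using Suc by (simp add: sign_swap_id del: cyc.simps)
qed

lemma cyc_formula: "cyc i d c = (if i \<le> c \<and> c < i + d then Suc c else if c = i + d then i else c)"
  by (induction d arbitrary: c) (auto simp: transpose_def)

lemma det_reindex:
  assumes p: "p permutes {0..<n}" and gh: "\<And>c. c < n \<Longrightarrow> g c = h (p c)"
  shows "det (mat n n (\<lambda>(r,c). X $$ (r, g c))) = signof p * det (mat n n (\<lambda>(r,c). X $$ (r, h c)))"
proof -
  have eq: "mat n n (\<lambda>(r,c). X $$ (r, g c)) = mat n n (\<lambda>(r,c). mat n n (\<lambda>(r,c). X $$ (r, h c)) $$ (r, p c))"
    using permutes_in_image[OF p] gh by (intro eq_matI) auto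
  show ?thesis unfolding eq by (rule det_permute_cols[OF mat_carrier p])
qed

lemma swap_minor:
  assumes X: "X \<in> carrier_mat n (n + 1)" and k: "k < n + 1" and ij: "i < n + 1" "j < n + 1"
  shows "maxminor (swapcols i j X) ({..<n+1} - {k}) = det (mat n n (\<lambda>(r,c). X $$ (r, transpose i j (fk k c))))"
proof -
  have X': "swapcols i j X \<in> carrier_mat n (n + 1)" using X by simp
  show ?thesis unfolding maxminor_eq[OF X' k]
    using X ij by (intro arg_cong[where f=det] eq_matI) (auto simp: fk_def transpose_def)
qed

lemma key_ij:
  fixes X :: "real mat"
  assumes ij: "i < j" "j < n + 1" and ev: "even (j - i)"
  shows "det (mat n n (\<lambda>(r,c). X $$ (r, transpose i j (fk i c)))) = - det (mat n n (\<lambda>(r,c). X $$ (r, fk j c)))"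
    and "det (mat n n (\<lambda>(r,c). X $$ (r, fk i c))) = - det (mat n n (\<lambda>(r,c). X $$ (r, transpose i j (fk j c))))"
proof -
  define d where "d = j - i - 1"
  have jd: "j = Suc (i + d)" using ij ev unfolding d_def by (cases "j - i") auto
  have odd: "odd d" using ij ev unfolding d_def by (cases "j - i") auto
  have p: "cyc i d permutes {0..<n}" using ij jd by (intro cyc_permutes) simp
  have s: "signof (cyc i d) = (- 1 :: real)" using odd by (simp add: cyc_sign)
  have e1: "transpose i j (fk i c) = fk j (cyc i d c)" if "c < n" for c
    unfolding cyc_formula fk_def transpose_def jd by auto
  have e2: "fk i c = transpose i j (fk j (cyc i d c))" if "c < n" for c
    unfolding cyc_formula fk_def transpose_def jd by auto
  show "det (mat n n (\<lambda>(r,c). X $$ (r, transpose i j (fk i c)))) = - det (mat n n (\<lambda>(r,c). X $$ (r, fk j c)))"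
    using det_reindex[where g="\<lambda>c. transpose i j (fk i c)" and h="fk j" and X=X, OF p e1] s by simp
  show "det (mat n n (\<lambda>(r,c). X $$ (r, fk i c))) = - det (mat n n (\<lambda>(r,c). X $$ (r, transpose i j (fk j c))))"
    using det_reindex[where h="\<lambda>c. transpose i j (fk j c)" and g="fk i" and X=X, OF p e2] s by simp
qed

lemma key_other:
  fixes X :: "real mat"
  assumes k: "k < n + 1" and ij: "i < n + 1" "j < n + 1" "i \<noteq> j" and kij: "k \<noteq> i" "k \<noteq> j"
  shows "det (mat n n (\<lambda>(r,c). X $$ (r, transpose i j (fk k c)))) = - det (mat n n (\<lambda>(r,c). X $$ (r, fk k c)))"
proof -
  define g where "g v = (if v < k then v else v - 1)" for v :: nat
  have p: "transpose (g i) (g j) permutes {0..<n}" using ij kij k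
    by (intro permutes_swap_id) (auto simp: g_def)
  have gij: "g i \<noteq> g j" using ij kij unfolding g_def by auto
  have s: "signof (transpose (g i) (g j)) = (- 1 :: real)" using gij by (simp add: sign_swap_id)
  have e: "transpose i j (fk k c) = fk k (transpose (g i) (g j) c)" if "c < n" for c
    using kij ij unfolding g_def fk_def transpose_def by auto
  show ?thesis
    using det_reindex[where g="\<lambda>c. transpose i j (fk k c)" and h="fk k" and X=X, OF p e] s by simp
qed


theorem lemma3p9:
  fixes X :: "real mat" and n i j :: nat
  assumes X: "X \<in> carrier_mat n (n + 1)"
    and same_sign: "(\<forall>I. I \<subseteq> {..<n + 1} \<and> card I = n \<longrightarrow> maxminor X I > 0)
                  \<or> (\<forall>I. I \<subseteq> {..<n + 1} \<and> card I = n \<longrightarrow> maxminor X I < 0)"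
    and ij: "i < n + 1" "j < n + 1" "i \<noteq> j"
    and parity: "even i \<longleftrightarrow> even j"
  shows "\<forall>I. I \<subseteq> {..<n + 1} \<and> card I = n \<longrightarrow>
           sgn (maxminor (swapcols i j X) I) = - sgn (maxminor X I)"
proof (intro allI impI)
  fix I assume I: "I \<subseteq> {..<n + 1} \<and> card I = n"
  then obtain k where k: "k < n + 1" and Ik: "I = {..<n+1} - {k}" using I_form by blast
  define M where "M g = det (mat n n (\<lambda>(r,c). X $$ (r, g c)))" for g
  define a where "a = min i j"
  define b where "b = max i j"
  have ab: "a < b" "b < n + 1" "even (b - a)" "a < n + 1"
    using ij parity unfolding a_def b_def by (auto simp: min_def max_def)
  have tr: "transpose i j = transpose a b"
    unfolding a_def b_def by (auto simp: min_def max_def transpose_commute)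
  have D: "maxminor X ({..<n+1} - {m}) = M (fk m)" if "m < n + 1" for m
    unfolding M_def by (rule maxminor_eq[OF X that])
  have D': "maxminor (swapcols i j X) ({..<n+1} - {m}) = M (\<lambda>c. transpose a b (fk m c))" if "m < n + 1" for m
    unfolding M_def tr[symmetric] by (rule swap_minor[OF X that ij(1,2)])
  have sg: "sgn (M (fk m1)) = sgn (M (fk m2))" if "m1 < n + 1" "m2 < n + 1" for m1 m2
  proof -
    have c: "card ({..<n+1} - {m}) = n" if "m < n + 1" for m using that by simp
    show ?thesis using same_sign D[OF that(1)] D[OF that(2)] c[OF that(1)] c[OF that(2)]
      by (metis Diff_subset sgn_pos sgn_neg)
  qed
  have "maxminor (swapcols i j X) I = - maxminor X I \<or>
        (maxminor (swapcols i j X) I = - maxminor X ({..<n+1} - {b}) \<and> k = a) \<or>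
        (maxminor (swapcols i j X) I = - maxminor X ({..<n+1} - {a}) \<and> k = b)"
  proof (cases "k = a \<or> k = b")
    case False
    then have "k \<noteq> a" "k \<noteq> b" by auto
    then show ?thesis unfolding Ik D'[OF k] D[OF k] M_def
      using key_other[OF k ab(4) ab(2) _ \<open>k \<noteq> a\<close> \<open>k \<noteq> b\<close>, of X] ab by auto
  next
    case True
    then show ?thesis unfolding Ik D'[OF k] D[OF ab(2)] D[OF ab(4)] M_def
      using key_ij[OF ab(1-3), of X] by auto
  qed
  then show "sgn (maxminor (swapcols i j X) I) = - sgn (maxminor X I)"
    using sg[OF ab(2) k] sg[OF ab(4) k] D[OF k] D[OF ab(2)] D[OF ab(4)] unfolding Ik
    by (auto simp: sgn_minus)
qed

end
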